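(* Consider $n\ge2$ agents in $\mathbb{R}^d$ ($d\ge2$) with positions $p_i(t)$, an undirected graph $\mathcal{G}=(\mathcal{V},\mathcal{E})$, constant desired bearings $\{g_{ij}^*\}_{(i,j)\in\mathcal{E}}$, leaders $\mathcal{V}_\ell=\{1,\dots,n_\ell\}$ and followers $\mathcal{V}_f=\{n_\ell+1,\dots,n\}$. The leaders move with a constant velocity: $\dot p_i(t)=\mathbf{v}_i^*$ for $i\in\mathcal{V}_\ell$, and $\mathbf{v}_\ell^*=[(\mathbf{v}_1^* )^T,\dots,(\mathbf{v}_{n_\ell}^* )^T]^T$ is constant. The followers obey, for $i\in\mathcal{V}_f$, $$\dot p_i=-k_P\sum_{j\in\mathcal{N}_i}P_{g_{ij}^*}(p_i-p_j)-k_I\xi_i,\qquad \dot\xi_i=\sum_{j\in\mathcal{N}_i}P_{g_{ij}^*}(p_i-p_j),$$ with constants $k_P,k_I>0$ and arbitrary initial conditions. Suppose the standing assumption below holds. Let $\delta(t)=p_f(t)-p_f^*(t)$ with $p_f^*(t)=-\mathcal{L}_{ff}^{-1}\mathcal{L}_{f\ell}p_\ell(t)$ and $\xi=[\xi_{n_\ell+1}^T,\dots,\xi_n^T]^T$. Then $\delta(t)$ and $\xi(t)$ converge globally and exponentially to $\delta(\infty)=0$ and $\xi(\infty)=\mathcal{L}_{ff}^{-1}\mathcal{L}_{f\ell}\mathbf{v}_\ell^*/k_I$ respectively. Consequently, as $t\to\infty$, $p_f(t)-p_f^*(t)\to0$ where $p_f^*(t)=-\mathcal{L}_{ff}^{-1}\mathcal{L}_{f\ell}p_\ell(t)$,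 and $\dot p_f(t)\to -\mathcal{L}_{ff}^{-1}\mathcal{L}_{f\ell}\mathbf{v}_\ell^*$.
   Context: $P_x=I_d-\frac{xx^T}{\|x\|^2}$ for nonzero $x$; $\mathcal{N}_i$ is the neighbor set of $i$ in $\mathcal{G}$. $p_\ell=[p_1^T,\dots,p_{n_\ell}^T]^T$, $p_f=[p_{n_\ell+1}^T,\dots,p_n^T]^T$. The bearing Laplacian $\mathcal{L}\in\mathbb{R}^{dn\times dn}$ has $(i,j)$-th $d\times d$ block $0$ if $i\ne j,(i,j)\notin\mathcal{E}$; $-P_{g_{ij}^*}$ if $i\ne j,(i,j)\in\mathcal{E}$; $\sum_{k\in\mathcal{N}_i}P_{g_{ik}^*}$ if $i=j$; it is partitioned as $\begin{bmatrix}\mathcal{L}_{\ell\ell}&\mathcal{L}_{\ell f}\\ \mathcal{L}_{f\ell}&\mathcal{L}_{ff}\end{bmatrix}$ according to leaders/followers. Infinitesimal bearing rigidity of a configuration $q\in\mathbb{R}^{dn}$ (no two points coinciding): orient each edge, let $g_k=(q_j-q_i)/\|q_j-q_i\|$ for the $k$-th oriented edge, $F_B(q)=[g_1^T,\dots,g_m^T]^T$, $R_B(q)=\partial F_B/\partial q$; $\mathcal{G}(q)$ is infinitesimally bearing rigid if $\mathrm{Null}(R_B(q))=\mathrm{span}\{\mathbf{1}_n\otimes I_d,q\}$. Target formation: for each $t$, $p^*(t)\in\mathbb{R}^{dn}$ with $p_i^*(t)=p_i(t)$ for $i\in\mathcal{V}_\ell$ and $(p_j^*(t)-p_i^*(t))/\|p_j^*(t)-p_i^*(t)\|=g_{ij}^*$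 for all $(i,j)\in\mathcal{E}$. Standing assumption: the target formation exists for all $t$, is infinitesimally bearing rigid, and $n_\ell\ge 2$. Under this assumption $\mathcal{L}_{ff}$ is symmetric positive definite. *)

theory Defs
  imports "HOL-Analysis.Analysis"
begin

text \<open>A configuration is an element of real^'d^'n (the stacked vector).
  The graph is a symmetric irreflexive relation E; g i j is the desired bearing g_ij^*.
  VL is the set of leaders, its complement the followers.\<close>

definition undirected_graph :: "('n \<Rightarrow> 'n \<Rightarrow> bool) \<Rightarrow> bool" where
  "undirected_graph E \<longleftrightarrow> (\<forall>i j. E i j \<longrightarrow> E j i) \<and> (\<forall>i. \<not> E i i)"

definition proj :: "real^'d \<Rightarrow> real^'d \<Rightarrow> real^'d" where
  "proj x v = v - ((x \<bullet> v) / (x \<bullet> x)) *\<^sub>R x"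

definition bearing_lap :: "('n::finite \<Rightarrow> 'n \<Rightarrow> bool) \<Rightarrow> ('n \<Rightarrow> 'n \<Rightarrow> real^'d)
    \<Rightarrow> real^'d^'n \<Rightarrow> real^'d^'n" where
  "bearing_lap E g q = (\<chi> i. \<Sum>j\<in>{j. E i j}. proj (g i j) (q$i - q$j))"

definition fol :: "'n set \<Rightarrow> real^'d^'n \<Rightarrow> real^'d^'n" where
  "fol VL x = (\<chi> i. if i \<notin> VL then x$i else 0)"

definition lead :: "'n set \<Rightarrow> real^'d^'n \<Rightarrow> real^'d^'n" where
  "lead VL x = (\<chi> i. if i \<in> VL then x$i else 0)"

text \<open>The blocks L_ff and L_fl as linear maps (L_fl acts on the leader part of its
  argument, L_ff on the follower part; results are follower vectors).\<close>
definition L_ff :: "('n::finite \<Rightarrow> 'n \<Rightarrow> bool) \<Rightarrow> ('n \<Rightarrow> 'n \<Rightarrow> real^'d) \<Rightarrow> 'n set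
    \<Rightarrow> real^'d^'n \<Rightarrow> real^'d^'n" where
  "L_ff E g VL x = fol VL (bearing_lap E g (fol VL x))"

definition L_fl :: "('n::finite \<Rightarrow> 'n \<Rightarrow> bool) \<Rightarrow> ('n \<Rightarrow> 'n \<Rightarrow> real^'d) \<Rightarrow> 'n set
    \<Rightarrow> real^'d^'n \<Rightarrow> real^'d^'n" where
  "L_fl E g VL y = fol VL (bearing_lap E g (lead VL y))"

definition L_ff_inv :: "('n::finite \<Rightarrow> 'n \<Rightarrow> bool) \<Rightarrow> ('n \<Rightarrow> 'n \<Rightarrow> real^'d) \<Rightarrow> 'n set
    \<Rightarrow> real^'d^'n \<Rightarrow> real^'d^'n" where
  "L_ff_inv E g VL w = (THE x. fol VL x = x \<and> L_ff E g VL x = fol VL w)"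

definition bearing_fun :: "('n::finite \<Rightarrow> 'n \<Rightarrow> bool) \<Rightarrow> real^'d^'n \<Rightarrow> real^'d^('n \<times> 'n)" where
  "bearing_fun E q = (\<chi> e. if E (fst e) (snd e)
      then (1 / norm (q$(snd e) - q$(fst e))) *\<^sub>R (q$(snd e) - q$(fst e)) else 0)"

text \<open>Infinitesimal bearing rigidity: no coincident points, and the null space of the
  bearing rigidity matrix R_B(q) (Jacobian of F_B at q) is span{1 (x) I_d, q}.\<close>
definition inf_bearing_rigid :: "('n::finite \<Rightarrow> 'n \<Rightarrow> bool) \<Rightarrow> real^'d^'n \<Rightarrow> bool" where
  "inf_bearing_rigid E q \<longleftrightarrow> (\<forall>i j. i \<noteq> j \<longrightarrow> q$i \<noteq> q$j) \<and>
     (\<exists>R. (bearing_fun E has_derivative R) (at q) \<and>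
          {x. R x = 0} = span ({(\<chi> i. c) | c. True} \<union> {q}))"

definition target_formation :: "('n::finite \<Rightarrow> 'n \<Rightarrow> bool) \<Rightarrow> ('n \<Rightarrow> 'n \<Rightarrow> real^'d) \<Rightarrow> 'n set
    \<Rightarrow> real^'d^'n \<Rightarrow> real^'d^'n \<Rightarrow> bool" where
  "target_formation E g VL pl q \<longleftrightarrow> (\<forall>i\<in>VL. q$i = pl$i) \<and>
     (\<forall>i j. E i j \<longrightarrow> (1 / norm (q$j - q$i)) *\<^sub>R (q$j - q$i) = g i j)"

text \<open>Standing assumption: for every t \<ge> 0 a target formation exists and is infinitesimally
  bearing rigid (n_l \<ge> 2 is stated separately).\<close>
definition standing_assumption :: "('n::finite \<Rightarrow> 'n \<Rightarrow> bool) \<Rightarrow> ('n \<Rightarrow> 'n \<Rightarrow> real^'d) \<Rightarrow> 'n set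
    \<Rightarrow> (real \<Rightarrow> real^'d^'n) \<Rightarrow> bool" where
  "standing_assumption E g VL p \<longleftrightarrow>
     (\<forall>t\<ge>0. \<exists>q. target_formation E g VL (p t) q \<and> inf_bearing_rigid E q)"

definition closed_loop :: "('n::finite \<Rightarrow> 'n \<Rightarrow> bool) \<Rightarrow> ('n \<Rightarrow> 'n \<Rightarrow> real^'d) \<Rightarrow> 'n set
    \<Rightarrow> real^'d^'n \<Rightarrow> real \<Rightarrow> real \<Rightarrow> (real \<Rightarrow> real^'d^'n) \<Rightarrow> (real \<Rightarrow> real^'d^'n) \<Rightarrow> bool" where
  "closed_loop E g VL v kP kI p \<xi> \<longleftrightarrow> (\<forall>t\<ge>0.
     (\<forall>i\<in>VL. ((\<lambda>s. p s $ i) has_vector_derivative v$i) (at t within {0..})) \<and>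
     (\<forall>i. i \<notin> VL \<longrightarrow>
        ((\<lambda>s. p s $ i) has_vector_derivative
           (- kP *\<^sub>R (\<Sum>j\<in>{j. E i j}. proj (g i j) (p t $ i - p t $ j)) - kI *\<^sub>R (\<xi> t $ i)))
           (at t within {0..}) \<and>
        ((\<lambda>s. \<xi> s $ i) has_vector_derivative
           (\<Sum>j\<in>{j. E i j}. proj (g i j) (p t $ i - p t $ j))) (at t within {0..})))"

end

theory Submission
  imports Defs
begin


lemma at_within_pos: "(x::real) > 0 \<Longrightarrow> at x within {0..} = at x"
  by (rule at_within_interior) simp

lemma sq_ab: "2*(a*b) \<le> a\<^sup>2 + (b::real)\<^sup>2"
proof -
  have "0 \<le> (a-b)\<^sup>2" by simp
  then show ?thesis by (simp add: power2_eq_square algebra_simps)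
qed

lemma arith_core:
  fixes a b LL Ly dL kP kI lam M \<epsilon> Q :: real
  assumes "a \<ge> 0" "b \<ge> 0" "LL \<ge> lam\<^sup>2 * a\<^sup>2" "dL \<le> M * a\<^sup>2" "\<bar>Ly\<bar> \<le> M * a * b"
    "kP > 0" "kI > 0" "\<epsilon> > 0" "Q = M + kP\<^sup>2 * M\<^sup>2 / (2 * kI)" "\<epsilon> * Q \<le> kP * lam\<^sup>2"
  shows "-2*kP*LL + \<epsilon> * dL - \<epsilon>*kP*Ly - \<epsilon>*kI*b\<^sup>2 \<le> - (kP*lam\<^sup>2) * a\<^sup>2 - (\<epsilon>*kI/2) * b\<^sup>2"
proof -
  have 1: "-2*kP*LL \<le> -2*kP*lam\<^sup>2*a\<^sup>2" using assms by simp
  have 2: "\<epsilon> * dL \<le> \<epsilon> * M * a\<^sup>2" using assms by (simp add: mult_left_mono)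
  have "kP * (-Ly) \<le> kP * (M * a * b)" using assms by (intro mult_left_mono) auto
  then have 3: "- \<epsilon>*kP*Ly \<le> \<epsilon> * (kP * M * a * b)" using assms
    by (metis (no_types, opaque_lifting) mult.assoc mult_left_mono less_le mult_minus_right mult_minus_left)
  have "0 \<le> (kP*M*a - kI*b)\<^sup>2" by simp
  then have "2*kI*(kP*M*a*b) \<le> kP\<^sup>2*M\<^sup>2*a\<^sup>2 + kI\<^sup>2*b\<^sup>2" by (simp add: power2_eq_square algebra_simps)
  then have "kP*M*a*b \<le> (kP\<^sup>2*M\<^sup>2/(2*kI))*a\<^sup>2 + (kI/2)*b\<^sup>2"
    using assms by (simp add: field_simps power2_eq_square)
  then have 4: "\<epsilon> * (kP * M * a * b) \<le> \<epsilon> * ((kP\<^sup>2*M\<^sup>2/(2*kI))*a\<^sup>2 + (kI/2)*b\<^sup>2)"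
    using assms by (intro mult_left_mono) auto
  have 5: "(\<epsilon> * Q) * a\<^sup>2 \<le> (kP * lam\<^sup>2) * a\<^sup>2" using assms by (intro mult_right_mono) auto
  show ?thesis using 1 2 3 4 5 assms(9) by (simp add: algebra_simps)
qed

lemma gronwall_exp:
  fixes V V' :: "real \<Rightarrow> real" and \<beta> :: real
  assumes d: "\<And>t. t \<ge> 0 \<Longrightarrow> (V has_real_derivative V' t) (at t within {0..})"
    and le: "\<And>t. t \<ge> 0 \<Longrightarrow> V' t \<le> - \<beta> * V t"
    and t: "t \<ge> 0"
  shows "V t \<le> exp (- \<beta> * t) * V 0"
proof -
  define W where "W s = exp (\<beta> * s) * V s" for s
  have dW: "(W has_real_derivative exp (\<beta> * s) * (\<beta> * V s + V' s)) (at s within {0..})" if "s \<ge> 0" for s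
    unfolding W_def
    by (rule derivative_eq_intros d[OF that] refl | simp add: algebra_simps)+
  have "W t \<le> W 0"
  proof (rule DERIV_nonpos_imp_decreasing_open[OF t])
    fix x assume x: "0 < x" "x < t"
    have "(W has_real_derivative exp (\<beta> * x) * (\<beta> * V x + V' x)) (at x)"
      using dW[of x] x by (simp add: at_within_pos)
    moreover have "exp (\<beta> * x) * (\<beta> * V x + V' x) \<le> 0"
      using le[of x] x by (intro mult_nonneg_nonpos) auto
    ultimately show "\<exists>y. (W has_real_derivative y) (at x) \<and> y \<le> 0" by blast
  next
    show "continuous_on {0..t} W"
      unfolding continuous_on_eq_continuous_within
    proof
      fix x assume "x \<in> {0..t}"
      then have "continuous (at x within {0..}) W"
        using dW[of x] by (auto intro: DERIV_continuous)
      then show "continuous (at x within {0..t}) W"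
        by (rule continuous_within_subset) auto
    qed
  qed
  then have "exp (\<beta> * t) * V t \<le> V 0" by (simp add: W_def)
  then have "exp (-\<beta> * t) * (exp (\<beta> * t) * V t) \<le> exp (-\<beta> * t) * V 0"
    by (intro mult_left_mono) auto
  then show ?thesis by (simp add: exp_minus field_simps)
qed

lemma ode_expo:
  fixes kP kI lam M :: real
  assumes kP: "kP > 0" and kI: "kI > 0" and lam: "lam > 0" and M: "M > 0"
  shows "\<exists>c \<alpha>. c > 0 \<and> \<alpha> > 0 \<and> (\<forall>(Lop::'a::real_inner \<Rightarrow> 'a) \<delta> e.
     bounded_linear Lop \<and> (\<forall>x y. Lop x \<bullet> y = x \<bullet> Lop y) \<and> (\<forall>x. norm (Lop x) \<le> M * norm x) \<and>
     (\<forall>t\<ge>0. \<delta> t \<bullet> Lop (\<delta> t) \<ge> lam * (norm (\<delta> t))\<^sup>2) \<and>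
     (\<forall>t\<ge>0. (\<delta> has_vector_derivative (- kP *\<^sub>R Lop (\<delta> t) - kI *\<^sub>R e t)) (at t within {0..}) \<and>
             (e has_vector_derivative Lop (\<delta> t)) (at t within {0..}))
     \<longrightarrow> (\<forall>t\<ge>0. norm (\<delta> t) + norm (e t) \<le> c * exp (- \<alpha> * t) * (norm (\<delta> 0) + norm (e 0))))"
proof -
  define Q where "Q = M + kP\<^sup>2 * M\<^sup>2 / (2 * kI)"
  have Q: "Q > 0" using M kP kI unfolding Q_def by (intro add_pos_nonneg) auto
  define \<epsilon> where "\<epsilon> = min (min lam kI) (kP * lam\<^sup>2 / Q)"
  have \<epsilon>: "\<epsilon> > 0" using lam kI kP Q by (simp add: \<epsilon>_def)
  have \<epsilon>Q: "\<epsilon> * Q \<le> kP * lam\<^sup>2" using Q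
    by (simp add: \<epsilon>_def min_def field_simps)
  have \<epsilon>1: "\<epsilon> \<le> lam" "\<epsilon> \<le> kI" by (auto simp: \<epsilon>_def)
  define m where "m = min lam kI / 2"
  have m: "m > 0" using lam kI by (simp add: m_def)
  define K where "K = M + kI + \<epsilon>"
  have K: "K > 0" using M kI \<epsilon> by (simp add: K_def)
  define r where "r = min (kP * lam\<^sup>2) (\<epsilon> * kI / 2)"
  have r: "r > 0" using kP lam \<epsilon> kI by (simp add: r_def)
  define \<beta> where "\<beta> = r / K"
  have \<beta>: "\<beta> > 0" using r K by (simp add: \<beta>_def)
  show ?thesis
  proof (intro exI conjI allI impI)
    show "sqrt (2 * K / m) > 0" using K m by simp
    show "\<beta> / 2 > 0" using \<beta> by simp
    fix Lop :: "'a \<Rightarrow> 'a" and \<delta> e :: "real \<Rightarrow> 'a"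
    assume H: "bounded_linear Lop \<and> (\<forall>x y. Lop x \<bullet> y = x \<bullet> Lop y) \<and> (\<forall>x. norm (Lop x) \<le> M * norm x) \<and>
     (\<forall>t\<ge>0. \<delta> t \<bullet> Lop (\<delta> t) \<ge> lam * (norm (\<delta> t))\<^sup>2) \<and>
     (\<forall>t\<ge>0. (\<delta> has_vector_derivative (- kP *\<^sub>R Lop (\<delta> t) - kI *\<^sub>R e t)) (at t within {0..}) \<and>
             (e has_vector_derivative Lop (\<delta> t)) (at t within {0..}))"
    then have bl: "bounded_linear Lop" and sym: "\<And>x y. Lop x \<bullet> y = x \<bullet> Lop y"
      and bnd: "\<And>x. norm (Lop x) \<le> M * norm x"
      and coer: "\<And>t. t \<ge> 0 \<Longrightarrow> \<delta> t \<bullet> Lop (\<delta> t) \<ge> lam * (norm (\<delta> t))\<^sup>2"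
      and d\<delta>: "\<And>t. t \<ge> 0 \<Longrightarrow> (\<delta> has_vector_derivative (- kP *\<^sub>R Lop (\<delta> t) - kI *\<^sub>R e t)) (at t within {0..})"
      and de: "\<And>t. t \<ge> 0 \<Longrightarrow> (e has_vector_derivative Lop (\<delta> t)) (at t within {0..})"
      by auto
    define V where "V t = \<delta> t \<bullet> Lop (\<delta> t) + kI * (e t \<bullet> e t) + \<epsilon> * (\<delta> t \<bullet> e t)" for t
    define V' where "V' t = -2*kP*(Lop (\<delta> t) \<bullet> Lop (\<delta> t)) + \<epsilon> * (\<delta> t \<bullet> Lop (\<delta> t))
        - \<epsilon>*kP*(Lop (\<delta> t) \<bullet> e t) - \<epsilon>*kI*(norm (e t))\<^sup>2" for t
    have dV: "(V has_real_derivative V' t) (at t within {0..})" if t: "t \<ge> 0" for t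
    proof -
      have dL: "((\<lambda>s. Lop (\<delta> s)) has_vector_derivative Lop (- kP *\<^sub>R Lop (\<delta> t) - kI *\<^sub>R e t)) (at t within {0..})"
        by (rule bounded_linear.has_vector_derivative[OF bl d\<delta>[OF t]])
      note i1 = bounded_bilinear.has_vector_derivative[OF bounded_bilinear_inner d\<delta>[OF t] dL]
      note i2 = bounded_bilinear.has_vector_derivative[OF bounded_bilinear_inner de[OF t] de[OF t]]
      note i3 = bounded_bilinear.has_vector_derivative[OF bounded_bilinear_inner d\<delta>[OF t] de[OF t]]
      have der: "(V has_vector_derivative
         ((\<delta> t \<bullet> Lop (- kP *\<^sub>R Lop (\<delta> t) - kI *\<^sub>R e t) + (- kP *\<^sub>R Lop (\<delta> t) - kI *\<^sub>R e t) \<bullet> Lop (\<delta> t))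
          + kI * (e t \<bullet> Lop (\<delta> t) + Lop (\<delta> t) \<bullet> e t)
          + \<epsilon> * (\<delta> t \<bullet> Lop (\<delta> t) + (- kP *\<^sub>R Lop (\<delta> t) - kI *\<^sub>R e t) \<bullet> e t))) (at t within {0..})"
        unfolding V_def
        by (intro has_vector_derivative_add has_vector_derivative_mult_right i1 i2 i3)
      have sy: "\<delta> t \<bullet> Lop (- kP *\<^sub>R Lop (\<delta> t) - kI *\<^sub>R e t) = Lop (\<delta> t) \<bullet> (- kP *\<^sub>R Lop (\<delta> t) - kI *\<^sub>R e t)"
        by (simp add: sym)
      have eq: "(\<delta> t \<bullet> Lop (- kP *\<^sub>R Lop (\<delta> t) - kI *\<^sub>R e t) + (- kP *\<^sub>R Lop (\<delta> t) - kI *\<^sub>R e t) \<bullet> Lop (\<delta> t))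
          + kI * (e t \<bullet> Lop (\<delta> t) + Lop (\<delta> t) \<bullet> e t)
          + \<epsilon> * (\<delta> t \<bullet> Lop (\<delta> t) + (- kP *\<^sub>R Lop (\<delta> t) - kI *\<^sub>R e t) \<bullet> e t) = V' t"
        unfolding sy
        by (simp add: V'_def inner_diff_left inner_diff_right power2_norm_eq_inner inner_commute[of "e t" "Lop (\<delta> t)"] algebra_simps)
      show ?thesis
        unfolding has_real_derivative_iff_has_vector_derivative
        by (rule has_vector_derivative_eq_rhs[OF der eq])
    qed
    have dVle: "V' t \<le> - \<beta> * V t" if t: "t \<ge> 0" for t
    proof -
      define a where "a = norm (\<delta> t)"
      define b where "b = norm (e t)"
      have a: "a \<ge> 0" and b: "b \<ge> 0" by (auto simp: a_def b_def)
      have c1: "\<delta> t \<bullet> Lop (\<delta> t) \<ge> lam * a\<^sup>2" using coer[OF t] by (simp add: a_def)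
      have c2: "\<delta> t \<bullet> Lop (\<delta> t) \<le> a * norm (Lop (\<delta> t))"
        unfolding a_def by (rule norm_cauchy_schwarz)
      have nL: "norm (Lop (\<delta> t)) \<le> M * a" using bnd by (simp add: a_def)
      have c3: "\<delta> t \<bullet> Lop (\<delta> t) \<le> M * a\<^sup>2"
        using c2 mult_left_mono[OF nL a] by (simp add: power2_eq_square algebra_simps)
      have lamL: "lam * a \<le> norm (Lop (\<delta> t))"
      proof (cases "a = 0")
        case True then show ?thesis by simp
      next
        case False
        then have "a > 0" using a by simp
        have "a * (lam * a) \<le> a * norm (Lop (\<delta> t))" using c1 c2 by (simp add: power2_eq_square algebra_simps)
        then show ?thesis using \<open>a > 0\<close> by simp
      qed
      have LL: "Lop (\<delta> t) \<bullet> Lop (\<delta> t) \<ge> lam\<^sup>2 * a\<^sup>2"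
      proof -
        have "(lam * a)\<^sup>2 \<le> (norm (Lop (\<delta> t)))\<^sup>2"
          using lamL lam a by (intro power_mono) auto
        then show ?thesis by (simp add: power2_norm_eq_inner power_mult_distrib)
      qed
      have Ly: "\<bar>Lop (\<delta> t) \<bullet> e t\<bar> \<le> M * a * b"
      proof -
        have "\<bar>Lop (\<delta> t) \<bullet> e t\<bar> \<le> norm (Lop (\<delta> t)) * b" unfolding b_def by (rule Cauchy_Schwarz_ineq2)
        also have "\<dots> \<le> M * a * b" using nL b by (rule mult_right_mono)
        finally show ?thesis .
      qed
      have core: "V' t \<le> - (kP*lam\<^sup>2) * a\<^sup>2 - (\<epsilon>*kI/2) * b\<^sup>2"
        unfolding V'_def b_def[symmetric]
        by (rule arith_core[OF a b LL c3 Ly kP kI \<epsilon> Q_def \<epsilon>Q])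
      have R1: "- (kP*lam\<^sup>2) * a\<^sup>2 - (\<epsilon>*kI/2) * b\<^sup>2 \<le> - r * (a\<^sup>2 + b\<^sup>2)"
      proof -
        have "r * a\<^sup>2 \<le> (kP*lam\<^sup>2) * a\<^sup>2" by (intro mult_right_mono) (auto simp: r_def)
        moreover have "r * b\<^sup>2 \<le> (\<epsilon>*kI/2) * b\<^sup>2" by (intro mult_right_mono) (auto simp: r_def)
        ultimately show ?thesis by (simp add: algebra_simps)
      qed
      have "V t \<le> K * (a\<^sup>2 + b\<^sup>2)"
      proof -
        have "\<delta> t \<bullet> e t \<le> a * b" unfolding a_def b_def by (rule norm_cauchy_schwarz)
        also have "a * b \<le> a\<^sup>2 + b\<^sup>2" using sq_ab[of a b] mult_nonneg_nonneg[OF a b] by linarith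
        finally have "\<epsilon> * (\<delta> t \<bullet> e t) \<le> \<epsilon> * (a\<^sup>2 + b\<^sup>2)" using \<epsilon> by (simp add: mult_left_mono)
        moreover have "kI * (e t \<bullet> e t) = kI * b\<^sup>2" by (simp add: b_def power2_norm_eq_inner)
        moreover have "M * a\<^sup>2 + kI * b\<^sup>2 + \<epsilon> * (a\<^sup>2 + b\<^sup>2) \<le> K * (a\<^sup>2 + b\<^sup>2)"
          using M kI by (simp add: K_def algebra_simps)
        ultimately show ?thesis using c3 unfolding V_def by linarith
      qed
      then have "\<beta> * V t \<le> \<beta> * (K * (a\<^sup>2 + b\<^sup>2))"
        using \<beta> by (intro mult_left_mono) auto
      moreover have "\<beta> * K = r" using K by (simp add: \<beta>_def)
      ultimately have "- r * (a\<^sup>2 + b\<^sup>2) \<le> - \<beta> * V t"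
        by (simp add: mult.assoc[symmetric])
      then show ?thesis using core R1 by linarith
    qed
    have Vlow: "V t \<ge> m * ((norm (\<delta> t))\<^sup>2 + (norm (e t))\<^sup>2)" if t: "t \<ge> 0" for t
    proof -
      define a where "a = norm (\<delta> t)"
      define b where "b = norm (e t)"
      have a: "a \<ge> 0" and b: "b \<ge> 0" by (auto simp: a_def b_def)
      have c1: "\<delta> t \<bullet> Lop (\<delta> t) \<ge> lam * a\<^sup>2" using coer[OF t] by (simp add: a_def)
      have "- (\<delta> t \<bullet> e t) \<le> a * b" unfolding a_def b_def
        using norm_cauchy_schwarz[of "- \<delta> t" "e t"] by simp
      also have "a * b \<le> (a\<^sup>2 + b\<^sup>2) / 2" using sq_ab[of a b] by simp
      finally have "- \<epsilon> * (\<delta> t \<bullet> e t) \<le> \<epsilon> * ((a\<^sup>2 + b\<^sup>2) / 2)" using \<epsilon>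
        by (metis mult_left_mono less_le mult_minus_left mult_minus_right)
      moreover have "kI * (e t \<bullet> e t) = kI * b\<^sup>2" by (simp add: b_def power2_norm_eq_inner)
      moreover have "m * (a\<^sup>2 + b\<^sup>2) \<le> lam * a\<^sup>2 + kI * b\<^sup>2 - \<epsilon> * ((a\<^sup>2 + b\<^sup>2) / 2)"
      proof -
        have "(m + \<epsilon>/2) * a\<^sup>2 \<le> lam * a\<^sup>2" using \<epsilon>1 by (intro mult_right_mono) (auto simp: m_def)
        moreover have "(m + \<epsilon>/2) * b\<^sup>2 \<le> kI * b\<^sup>2" using \<epsilon>1 by (intro mult_right_mono) (auto simp: m_def)
        ultimately show ?thesis by (simp add: algebra_simps add_divide_distrib)
      qed
      ultimately show ?thesis using c1 unfolding V_def a_def[symmetric] b_def[symmetric] by linarith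
    qed
    have V0: "V 0 \<le> K * ((norm (\<delta> 0))\<^sup>2 + (norm (e 0))\<^sup>2)"
    proof -
      define a where "a = norm (\<delta> 0)"
      define b where "b = norm (e 0)"
      have a: "a \<ge> 0" and b: "b \<ge> 0" by (auto simp: a_def b_def)
      have c2: "\<delta> 0 \<bullet> Lop (\<delta> 0) \<le> a * norm (Lop (\<delta> 0))"
        unfolding a_def by (rule norm_cauchy_schwarz)
      have nL: "norm (Lop (\<delta> 0)) \<le> M * a" using bnd by (simp add: a_def)
      have c3: "\<delta> 0 \<bullet> Lop (\<delta> 0) \<le> M * a\<^sup>2"
        using c2 mult_left_mono[OF nL a] by (simp add: power2_eq_square algebra_simps)
      have "\<delta> 0 \<bullet> e 0 \<le> a * b" unfolding a_def b_def by (rule norm_cauchy_schwarz)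
      also have "a * b \<le> a\<^sup>2 + b\<^sup>2" using sq_ab[of a b] mult_nonneg_nonneg[OF a b] by linarith
      finally have "\<epsilon> * (\<delta> 0 \<bullet> e 0) \<le> \<epsilon> * (a\<^sup>2 + b\<^sup>2)" using \<epsilon> by (simp add: mult_left_mono)
      moreover have "kI * (e 0 \<bullet> e 0) = kI * b\<^sup>2" by (simp add: b_def power2_norm_eq_inner)
      moreover have "M * a\<^sup>2 + kI * b\<^sup>2 + \<epsilon> * (a\<^sup>2 + b\<^sup>2) \<le> K * (a\<^sup>2 + b\<^sup>2)"
        using M kI by (simp add: K_def algebra_simps)
      ultimately show ?thesis using c3 unfolding V_def a_def b_def by linarith
    qed
    fix t :: real assume t: "t \<ge> 0"
    define a where "a = norm (\<delta> t)"
    define b where "b = norm (e t)"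
    define a0 where "a0 = norm (\<delta> 0)"
    define b0 where "b0 = norm (e 0)"
    have pos: "a \<ge> 0" "b \<ge> 0" "a0 \<ge> 0" "b0 \<ge> 0" by (auto simp: a_def b_def a0_def b0_def)
    have G: "V t \<le> exp (- \<beta> * t) * V 0" by (rule gronwall_exp[OF dV dVle t])
    have "m * (a\<^sup>2 + b\<^sup>2) \<le> exp (- \<beta> * t) * (K * (a0\<^sup>2 + b0\<^sup>2))"
      using Vlow[OF t] G mult_left_mono[OF V0 exp_ge_zero[of "- \<beta> * t"]]
      unfolding a_def b_def a0_def b0_def by linarith
    then have "a\<^sup>2 + b\<^sup>2 \<le> (exp (- \<beta> * t) * (K * (a0\<^sup>2 + b0\<^sup>2))) / m"
      using m by (simp add: le_divide_eq ac_simps)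
    also have "\<dots> = (K / m) * exp (- \<beta> * t) * (a0\<^sup>2 + b0\<^sup>2)" by simp
    finally have "a\<^sup>2 + b\<^sup>2 \<le> (K / m) * exp (- \<beta> * t) * (a0\<^sup>2 + b0\<^sup>2)" .
    moreover have "(a + b)\<^sup>2 \<le> 2 * (a\<^sup>2 + b\<^sup>2)" using sq_ab[of a b] by (simp add: power2_eq_square algebra_simps)
    moreover have "a0\<^sup>2 + b0\<^sup>2 \<le> (a0 + b0)\<^sup>2" using pos by (simp add: power2_eq_square algebra_simps)
    ultimately have "(a + b)\<^sup>2 \<le> (2 * K / m) * exp (- \<beta> * t) * (a0 + b0)\<^sup>2"
    proof -
      assume h1: "a\<^sup>2 + b\<^sup>2 \<le> (K / m) * exp (- \<beta> * t) * (a0\<^sup>2 + b0\<^sup>2)"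
        and h2: "(a + b)\<^sup>2 \<le> 2 * (a\<^sup>2 + b\<^sup>2)" and h3: "a0\<^sup>2 + b0\<^sup>2 \<le> (a0 + b0)\<^sup>2"
      have "(K / m) * exp (- \<beta> * t) * (a0\<^sup>2 + b0\<^sup>2) \<le> (K / m) * exp (- \<beta> * t) * (a0 + b0)\<^sup>2"
        using K m h3 by (intro mult_left_mono) auto
      note h4 = this
      have "(a + b)\<^sup>2 \<le> 2 * (a\<^sup>2 + b\<^sup>2)" by (rule h2)
      also have "\<dots> \<le> 2 * ((K / m) * exp (- \<beta> * t) * (a0\<^sup>2 + b0\<^sup>2))" using h1 by simp
      also have "\<dots> \<le> 2 * ((K / m) * exp (- \<beta> * t) * (a0 + b0)\<^sup>2)" using h4 by simp
      also have "\<dots> = (2*K/m)*exp (- \<beta> * t)*(a0+b0)\<^sup>2" by simp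
      finally show ?thesis .
    qed
    also have "\<dots> = (sqrt (2 * K / m) * exp (- (\<beta>/2) * t) * (a0 + b0))\<^sup>2"
    proof -
      have e2: "exp (-\<beta>*t) = (exp (-(\<beta>/2)*t))\<^sup>2" by (simp add: power2_eq_square flip: exp_add)
      have s2: "(sqrt (2*K/m))\<^sup>2 = 2*K/m" using K m by simp
      show ?thesis by (simp only: power_mult_distrib e2 s2)
    qed
    finally have sq: "(a + b)\<^sup>2 \<le> (sqrt (2 * K / m) * exp (- (\<beta>/2) * t) * (a0 + b0))\<^sup>2" .
    have "0 \<le> sqrt (2 * K / m) * exp (- (\<beta>/2) * t) * (a0 + b0)"
      using pos K m by (intro mult_nonneg_nonneg) auto
    then have "a + b \<le> sqrt (2 * K / m) * exp (- (\<beta>/2) * t) * (a0 + b0)"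
      by (rule power2_le_imp_le[OF sq])
    then show "norm (\<delta> t) + norm (e t) \<le> sqrt (2 * K / m) * exp (- (\<beta> / 2) * t) * (norm (\<delta> 0) + norm (e 0))"
      unfolding a_def b_def a0_def b0_def .
  qed
qed



lemma proj_sym: "proj g u \<bullet> w = u \<bullet> proj g w"
  by (simp add: proj_def inner_diff_left inner_diff_right inner_commute algebra_simps)

lemma proj_sq: "proj g u \<bullet> proj g u = u \<bullet> proj g u"
proof (cases "g = 0")
  case True then show ?thesis by (simp add: proj_def)
next
  case False
  then have "g \<bullet> g \<noteq> 0" by simp
  then show ?thesis
    by (simp add: proj_def inner_diff_left inner_diff_right inner_commute power2_eq_square field_simps)
qed

lemma proj_neg: "proj (- g) = proj g"
  by (rule ext) (simp add: proj_def)

lemma proj_linear: "linear (proj g)"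
  by (rule linearI) (simp_all add: proj_def inner_add_right algebra_simps add_divide_distrib scaleR_add_left)

lemma fol_idem[simp]: "fol VL (fol VL x) = fol VL x"
  by (simp add: fol_def vec_eq_iff)
lemma lead_idem[simp]: "lead VL (lead VL x) = lead VL x"
  by (simp add: lead_def vec_eq_iff)
lemma fol_lead[simp]: "fol VL (lead VL x) = 0" "lead VL (fol VL x) = 0"
  by (simp_all add: fol_def lead_def vec_eq_iff)
lemma fol_plus_lead: "fol VL x + lead VL x = x"
  by (simp add: fol_def lead_def vec_eq_iff)
lemma fol_linear: "linear (fol VL)"
  by (rule linearI) (simp_all add: fol_def vec_eq_iff)
lemma lead_linear: "linear (lead VL)"
  by (rule linearI) (simp_all add: lead_def vec_eq_iff)
lemma fol_inner: "fol VL x \<bullet> y = x \<bullet> fol VL y"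
  unfolding inner_vec_def fol_def by (intro sum.cong) auto

lemma bl_linear:
  fixes E :: "'n::finite \<Rightarrow> 'n \<Rightarrow> bool" and g :: "'n \<Rightarrow> 'n \<Rightarrow> real^'d::finite"
  shows "linear (bearing_lap E g)"
proof (rule linearI)
  fix x y :: "real^'d^'n"
  have e: "proj h (a + b - (c + d)) = proj h (a - c) + proj h (b - d)" for h a b c d :: "real^'d"
    using linear_add[OF proj_linear, of h "a - c" "b - d"] by (simp add: algebra_simps)
  show "bearing_lap E g (x + y) = bearing_lap E g x + bearing_lap E g y"
    unfolding bearing_lap_def by (subst vec_eq_iff) (simp add: e sum.distrib)
next
  fix c :: real and x :: "real^'d^'n"
  have e: "proj h (c *\<^sub>R a - c *\<^sub>R b) = c *\<^sub>R proj h (a - b)" for h a b :: "real^'d"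
    using linear_scale[OF proj_linear, of h c "a - b"] by (simp add: algebra_simps)
  show "bearing_lap E g (c *\<^sub>R x) = c *\<^sub>R bearing_lap E g x"
    unfolding bearing_lap_def by (subst vec_eq_iff) (simp add: e scaleR_sum_right)
qed

lemma sum_Collect_if: "(\<Sum>j\<in>{j. P j}. h j) = (\<Sum>j\<in>(UNIV::'a::finite set). if P j then h j else 0)"
  by (simp add: sum.If_cases)

lemma proj_minus: "proj h (- a) = - proj h (a::real^'d::finite)"
  by (simp add: proj_def algebra_simps)

lemma bl_inner2:
  fixes E :: "'n::finite \<Rightarrow> 'n \<Rightarrow> bool" and g :: "'n \<Rightarrow> 'n \<Rightarrow> real^'d::finite"
  assumes und: "undirected_graph E" and sym: "\<forall>i j. E i j \<longrightarrow> proj (g j i) = proj (g i j)"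
  shows "2 * (bearing_lap E g u \<bullet> w) =
     (\<Sum>i\<in>UNIV. \<Sum>j\<in>UNIV. if E i j then proj (g i j) (u$i - u$j) \<bullet> (w$i - w$j) else 0)"
proof -
  define f where "f i j = (if E i j then proj (g i j) (u$i - u$j) \<bullet> w$i else 0)" for i j
  have A: "bearing_lap E g u \<bullet> w = (\<Sum>i\<in>UNIV. \<Sum>j\<in>UNIV. f i j)"
    unfolding bearing_lap_def f_def
    apply (subst inner_vec_def)
    apply (simp add: inner_sum_left sum_Collect_if)
    apply (intro sum.cong refl)
    apply simp
    done
  have B: "(\<Sum>i\<in>UNIV. \<Sum>j\<in>UNIV. f i j) = (\<Sum>i\<in>UNIV. \<Sum>j\<in>UNIV. f j i)"
    by (rule sum.swap)
  have C: "f j i = (if E i j then - (proj (g i j) (u$i - u$j) \<bullet> w$j) else 0)" for i j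
  proof (cases "E i j")
    case True
    then have "E j i" using und by (auto simp: undirected_graph_def)
    moreover have "u$j - u$i = - (u$i - u$j)" by simp
    ultimately show ?thesis using True sym
      by (simp only: f_def if_True proj_minus inner_minus_left)
  next
    case False
    then have "\<not> E j i" using und by (auto simp: undirected_graph_def)
    then show ?thesis using False by (simp add: f_def)
  qed
  have "2 * (bearing_lap E g u \<bullet> w) = (\<Sum>i\<in>UNIV. \<Sum>j\<in>UNIV. f i j + f j i)"
    using A B by (simp add: sum.distrib)
  also have "\<dots> = (\<Sum>i\<in>UNIV. \<Sum>j\<in>UNIV. if E i j then proj (g i j) (u$i - u$j) \<bullet> (w$i - w$j) else 0)"
  proof (intro sum.cong refl)
    fix i j
    show "f i j + f j i = (if E i j then proj (g i j) (u$i - u$j) \<bullet> (w$i - w$j) else 0)"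
      unfolding C[where i=i and j=j] by (simp add: f_def inner_diff_right)
  qed
  finally show ?thesis .
qed

lemma proj_sym2: "(b::real^'d::finite) \<bullet> proj h a = a \<bullet> proj h b"
  by (simp add: proj_def inner_diff_right inner_commute algebra_simps)

lemma bl_sym:
  fixes E :: "'n::finite \<Rightarrow> 'n \<Rightarrow> bool" and g :: "'n \<Rightarrow> 'n \<Rightarrow> real^'d::finite"
  assumes und: "undirected_graph E" and sym: "\<forall>i j. E i j \<longrightarrow> proj (g j i) = proj (g i j)"
  shows "bearing_lap E g u \<bullet> w = u \<bullet> bearing_lap E g w"
proof -
  have "2 * (bearing_lap E g u \<bullet> w) = 2 * (bearing_lap E g w \<bullet> u)"
    unfolding bl_inner2[OF und sym]
    by (intro sum.cong refl) (simp add: proj_sym proj_sym2)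
  then show ?thesis by (simp add: inner_commute)
qed

lemma bl_quad:
  fixes E :: "'n::finite \<Rightarrow> 'n \<Rightarrow> bool" and g :: "'n \<Rightarrow> 'n \<Rightarrow> real^'d::finite"
  assumes und: "undirected_graph E" and sym: "\<forall>i j. E i j \<longrightarrow> proj (g j i) = proj (g i j)"
  shows "x \<bullet> bearing_lap E g x \<ge> 0"
    and "x \<bullet> bearing_lap E g x = 0 \<Longrightarrow> E i j \<Longrightarrow> proj (g i j) (x$i - x$j) = 0"
proof -
  define h where "h i j = (if E i j then proj (g i j) (x$i - x$j) \<bullet> (x$i - x$j) else 0)" for i j
  have hn: "h i j \<ge> 0" for i j
  proof -
    have "proj (g i j) (x$i - x$j) \<bullet> (x$i - x$j) = proj (g i j) (x$i - x$j) \<bullet> proj (g i j) (x$i - x$j)"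
      using proj_sq[of "g i j" "x$i - x$j"] proj_sym[of "g i j" "x$i - x$j" "x$i - x$j"] by linarith
    then show ?thesis unfolding h_def by simp
  qed
  have eq: "2 * (x \<bullet> bearing_lap E g x) = (\<Sum>i\<in>UNIV. \<Sum>j\<in>UNIV. h i j)"
    using bl_inner2[OF und sym, of x x] by (simp add: h_def inner_commute[of "bearing_lap E g x" x])
  have "(\<Sum>i\<in>UNIV. \<Sum>j\<in>UNIV. h i j) \<ge> 0" by (intro sum_nonneg) (auto intro: hn)
  then show "x \<bullet> bearing_lap E g x \<ge> 0" using eq by simp
  assume z: "x \<bullet> bearing_lap E g x = 0" and e: "E i j"
  have "(\<Sum>i\<in>UNIV. \<Sum>j\<in>UNIV. h i j) = 0" using eq z by simp
  then have "\<forall>i\<in>UNIV. (\<Sum>j\<in>UNIV. h i j) = 0"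
    by (subst sum_nonneg_eq_0_iff[symmetric]) (auto intro!: sum_nonneg hn)
  then have "(\<Sum>j\<in>UNIV. h i j) = 0" by simp
  then have "h i j = 0" by (subst (asm) sum_nonneg_eq_0_iff) (auto intro: hn)
  then have "proj (g i j) (x$i - x$j) \<bullet> (x$i - x$j) = 0"
    using e by (simp add: h_def)
  then have "proj (g i j) (x$i - x$j) \<bullet> proj (g i j) (x$i - x$j) = 0"
    using proj_sq[of "g i j" "x$i - x$j"] proj_sym[of "g i j" "x$i - x$j" "x$i - x$j"] by linarith
  then show "proj (g i j) (x$i - x$j) = 0" by simp
qed

lemma proj_zero_par: "proj h w = 0 \<Longrightarrow> w = ((h \<bullet> w) / (h \<bullet> h)) *\<^sub>R h"
  by (simp add: proj_def)


lemma rigid_null: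
  fixes E :: "'n::finite \<Rightarrow> 'n \<Rightarrow> bool" and g :: "'n \<Rightarrow> 'n \<Rightarrow> real^'d::finite"
  assumes rig: "inf_bearing_rigid E q" and tf: "target_formation E g VL pl q"
    and und: "undirected_graph E"
    and px: "\<And>i j. E i j \<Longrightarrow> proj (g i j) (x$i - x$j) = 0"
  shows "\<exists>k c. \<forall>i. x$i = c + k *\<^sub>R q$i"
proof -
  obtain R where R: "(bearing_fun E has_derivative R) (at q)"
    and null: "{x. R x = 0} = span ({(\<chi> i. c) | c. True} \<union> {q})"
  proof -
    have "\<exists>R. (bearing_fun E has_derivative R) (at q) \<and>
          {x. R x = 0} = span ({(\<chi> i. c) | c. True} \<union> {q})"
      using rig unfolding inf_bearing_rigid_def by (rule conjunct2)
    then show ?thesis using that by (elim exE conjE)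
  qed
  have dist: "\<And>i j. i \<noteq> j \<Longrightarrow> q$i \<noteq> q$j" using rig unfolding inf_bearing_rigid_def by (elim conjE) simp
  have par: "\<exists>b. x$j - x$i = b *\<^sub>R (q$j - q$i)" if e: "E i j" for i j
  proof -
    have "i \<noteq> j" using e und by (auto simp: undirected_graph_def)
    then have nz: "norm (q$j - q$i) \<noteq> 0" using dist[of j i] by simp
    have gij: "g i j = (1 / norm (q$j - q$i)) *\<^sub>R (q$j - q$i)" using tf e by (simp add: target_formation_def)
    define c where "c = (g i j \<bullet> (x$i - x$j)) / (g i j \<bullet> g i j)"
    have "x$i - x$j = c *\<^sub>R g i j" using proj_zero_par[OF px[OF e]] by (simp add: c_def)
    then have "x$j - x$i = (- c / norm (q$j - q$i)) *\<^sub>R (q$j - q$i)"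
      by (simp add: gij algebra_simps)
    then show ?thesis by blast
  qed
  define \<beta> where "\<beta> i j = (SOME b. x$j - x$i = b *\<^sub>R (q$j - q$i))" for i j
  have \<beta>: "E i j \<Longrightarrow> x$j - x$i = \<beta> i j *\<^sub>R (q$j - q$i)" for i j
    unfolding \<beta>_def by (rule someI_ex) (rule par)
  define \<gamma> where "\<gamma> h = bearing_fun E (q + h *\<^sub>R x)" for h :: real
  have ev: "\<forall>\<^sub>F h in at 0. \<forall>e::'n\<times>'n. E (fst e) (snd e) \<longrightarrow> 1 + h * \<beta> (fst e) (snd e) > 0"
  proof (rule eventually_all_finite)
    fix e :: "'n \<times> 'n"
    have "((\<lambda>h::real. 1 + h * \<beta> (fst e) (snd e)) \<longlongrightarrow> 1 + 0 * \<beta> (fst e) (snd e)) (at 0)"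
      by (intro tendsto_intros)
    then have "\<forall>\<^sub>F h in at 0. 1 + h * \<beta> (fst e) (snd e) > 0"
      by (rule order_tendstoD(1)) simp
    then show "\<forall>\<^sub>F h in at 0. E (fst e) (snd e) \<longrightarrow> 1 + h * \<beta> (fst e) (snd e) > 0"
      by (rule eventually_mono) simp
  qed
  have ev2: "\<forall>\<^sub>F h in at 0. bearing_fun E q = \<gamma> h"
  proof (rule eventually_mono[OF ev])
    fix h :: real
    assume H: "\<forall>e::'n\<times>'n. E (fst e) (snd e) \<longrightarrow> 1 + h * \<beta> (fst e) (snd e) > 0"
    show "bearing_fun E q = \<gamma> h"
      unfolding \<gamma>_def bearing_fun_def
    proof (subst vec_eq_iff, intro allI)
      fix e :: "'n \<times> 'n"
      obtain i j where ij: "e = (i, j)" by (cases e)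
      show "(\<chi> e. if E (fst e) (snd e) then (1 / norm (q $ snd e - q $ fst e)) *\<^sub>R (q $ snd e - q $ fst e) else 0) $ e =
        (\<chi> e. if E (fst e) (snd e) then (1 / norm ((q + h *\<^sub>R x) $ snd e - (q + h *\<^sub>R x) $ fst e)) *\<^sub>R
           ((q + h *\<^sub>R x) $ snd e - (q + h *\<^sub>R x) $ fst e) else 0) $ e"
      proof (cases "E i j")
        case True
        define u where "u = q$j - q$i"
        have pos: "1 + h * \<beta> i j > 0" using H True by (metis fst_conv snd_conv)
        have "(q + h *\<^sub>R x) $ j - (q + h *\<^sub>R x) $ i = u + h *\<^sub>R (x$j - x$i)"
          by (simp add: u_def algebra_simps)
        also have "\<dots> = (1 + h * \<beta> i j) *\<^sub>R u" unfolding \<beta>[OF True, folded u_def] by (simp add: algebra_simps)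
        finally have eq: "(q + h *\<^sub>R x) $ j - (q + h *\<^sub>R x) $ i = (1 + h * \<beta> i j) *\<^sub>R u" .
        have sc: "(1 / norm ((1 + h * \<beta> i j) *\<^sub>R u)) *\<^sub>R ((1 + h * \<beta> i j) *\<^sub>R u) = (1 / norm u) *\<^sub>R u"
          using pos by (simp add: abs_of_pos)
        show ?thesis
          unfolding ij vec_lambda_beta fst_conv snd_conv eq u_def[symmetric] sc by (simp add: True)
      next
        case False
        then show ?thesis by (simp add: ij)
      qed
    qed
  qed
  have d1: "(\<gamma> has_derivative (\<lambda>h. R (h *\<^sub>R x))) (at 0)"
  proof -
    have "((\<lambda>h::real. q + h *\<^sub>R x) has_derivative (\<lambda>h. h *\<^sub>R x)) (at 0)"
      by (auto intro!: derivative_eq_intros)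
    moreover have "(bearing_fun E has_derivative R) (at ((\<lambda>h::real. q + h *\<^sub>R x) 0))" using R by simp
    ultimately have "((bearing_fun E \<circ> (\<lambda>h::real. q + h *\<^sub>R x)) has_derivative (R \<circ> (\<lambda>h. h *\<^sub>R x))) (at 0)"
      by (rule diff_chain_at)
    then show ?thesis by (simp add: \<gamma>_def[abs_def] o_def)
  qed
  have d2: "(\<gamma> has_derivative (\<lambda>h. 0)) (at 0)"
    by (rule has_derivative_transform_eventually[OF has_derivative_const ev2]) (simp_all add: \<gamma>_def)
  have "(\<lambda>h. R (h *\<^sub>R x)) = (\<lambda>h. 0)" by (rule has_derivative_unique[OF d1 d2])
  then have "R x = 0" by (metis scaleR_one)
  then have "x \<in> span (insert q {(\<chi> i. c) | c. True})" using null by auto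
  then obtain k where k: "x - k *\<^sub>R q \<in> span {(\<chi> i. c) | c. True}"
    unfolding span_insert by blast
  have sub: "subspace ({(\<chi> i. c) | c::real^'d. True} :: (real^'d^'n) set)"
  proof (rule subspaceI)
    show "(0::real^'d^'n) \<in> {(\<chi> i. c) | c. True}" by (auto intro!: exI[of _ 0] simp: vec_eq_iff)
  next
    fix a b :: "real^'d^'n"
    assume "a \<in> {(\<chi> i. c) | c. True}" "b \<in> {(\<chi> i. c) | c. True}"
    then obtain ca cb where "a = (\<chi> i. ca)" "b = (\<chi> i. cb)" by blast
    then show "a + b \<in> {(\<chi> i. c) | c. True}" by (auto intro!: exI[of _ "ca + cb"] simp: vec_eq_iff)
  next
    fix r :: real and a :: "real^'d^'n"
    assume "a \<in> {(\<chi> i. c) | c. True}"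
    then obtain ca where "a = (\<chi> i. ca)" by blast
    then show "r *\<^sub>R a \<in> {(\<chi> i. c) | c. True}" by (auto intro!: exI[of _ "r *\<^sub>R ca"] simp: vec_eq_iff)
  qed
  have "x - k *\<^sub>R q \<in> {(\<chi> i. c) | c. True}" using k sub by (simp add: span_eq_iff[THEN iffD2])
  then obtain c where c: "x - k *\<^sub>R q = (\<chi> i. c)" by blast
  have "\<forall>i. x$i = c + k *\<^sub>R q$i"
  proof
    fix i
    have "(x - k *\<^sub>R q) $ i = c" using c by simp
    then show "x$i = c + k *\<^sub>R q$i" by (simp add: algebra_simps)
  qed
  then show ?thesis by blast
qed



lemma fol_zero[simp]: "fol VL 0 = 0" "lead VL 0 = 0"
  by (simp_all add: fol_def lead_def vec_eq_iff)

lemma fol_add[simp]: "fol VL (a + b) = fol VL a + fol VL b" "lead VL (a + b) = lead VL a + lead VL b"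
  by (simp_all add: fol_def lead_def vec_eq_iff)
lemma fol_diff[simp]: "fol VL (a - b) = fol VL a - fol VL b" "lead VL (a - b) = lead VL a - lead VL b"
  by (simp_all add: fol_def lead_def vec_eq_iff)
lemma fol_scale[simp]: "fol VL (c *\<^sub>R a) = c *\<^sub>R fol VL a" "lead VL (c *\<^sub>R a) = c *\<^sub>R lead VL a"
  by (simp_all add: fol_def lead_def vec_eq_iff)

lemma coercive:
  fixes Lop :: "'a::euclidean_space \<Rightarrow> 'a" and W :: "'a set"
  assumes lin: "linear Lop" and cl: "closed W" and sc: "\<And>x c. x \<in> W \<Longrightarrow> c *\<^sub>R x \<in> W"
    and pos: "\<And>x. x \<in> W \<Longrightarrow> x \<noteq> 0 \<Longrightarrow> x \<bullet> Lop x > 0"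
  shows "\<exists>lam>0. \<forall>x\<in>W. x \<bullet> Lop x \<ge> lam * (norm x)\<^sup>2"
proof -
  define S where "S = W \<inter> sphere 0 1"
  have bl: "bounded_linear Lop" using lin by (simp add: linear_conv_bounded_linear)
  have scal: "(c *\<^sub>R x) \<bullet> Lop (c *\<^sub>R x) = c\<^sup>2 * (x \<bullet> Lop x)" for c x
    using linear_scale[OF lin, of c x] by (simp add: power2_eq_square)
  show ?thesis
  proof (cases "S = {}")
    case True
    have "x \<bullet> Lop x \<ge> 1 * (norm x)\<^sup>2" if x: "x \<in> W" for x
    proof (cases "x = 0")
      case True then show ?thesis using linear_0[OF lin] by simp
    next
      case False
      then have "(1 / norm x) *\<^sub>R x \<in> S" using sc[OF x] by (simp add: S_def)
      then show ?thesis using \<open>S = {}\<close> by blast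
    qed
    then show ?thesis by (intro exI[of _ 1]) auto
  next
    case False
    have "compact S" unfolding S_def using cl by (intro closed_Int_compact) auto
    moreover have "continuous_on S (\<lambda>x. x \<bullet> Lop x)"
      by (intro continuous_intros linear_continuous_on bl)
    ultimately obtain x0 where x0: "x0 \<in> S" and mn: "\<And>y. y \<in> S \<Longrightarrow> x0 \<bullet> Lop x0 \<le> y \<bullet> Lop y"
      using continuous_attains_inf[OF _ False] by blast
    have "x0 \<in> W" "x0 \<noteq> 0" using x0 by (auto simp: S_def)
    then have lpos: "x0 \<bullet> Lop x0 > 0" by (rule pos)
    have "x \<bullet> Lop x \<ge> (x0 \<bullet> Lop x0) * (norm x)\<^sup>2" if x: "x \<in> W" for x
    proof (cases "x = 0")
      case True then show ?thesis using linear_0[OF lin] by simp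
    next
      case False
      then have "(1 / norm x) *\<^sub>R x \<in> S" using sc[OF x] by (simp add: S_def)
      then have "x0 \<bullet> Lop x0 \<le> (1 / norm x)\<^sup>2 * (x \<bullet> Lop x)" using mn scal by metis
      then have "(norm x)\<^sup>2 * (x0 \<bullet> Lop x0) \<le> (norm x)\<^sup>2 * ((1 / norm x)\<^sup>2 * (x \<bullet> Lop x))"
        by (intro mult_left_mono) auto
      also have "\<dots> = x \<bullet> Lop x" using False by (simp add: power2_eq_square field_simps)
      finally show ?thesis by (simp add: mult.commute)
    qed
    then show ?thesis using lpos by blast
  qed
qed

lemma tf_sym:
  fixes E :: "'n::finite \<Rightarrow> 'n \<Rightarrow> bool" and g :: "'n \<Rightarrow> 'n \<Rightarrow> real^'d::finite"
  assumes tf: "target_formation E g VL pl q" and und: "undirected_graph E"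
  shows "\<forall>i j. E i j \<longrightarrow> proj (g j i) = proj (g i j)"
proof (intro allI impI)
  fix i j assume e: "E i j"
  then have e': "E j i" using und by (auto simp: undirected_graph_def)
  have "g j i = (1 / norm (q$i - q$j)) *\<^sub>R (q$i - q$j)" using tf e' by (simp add: target_formation_def)
  also have "\<dots> = - ((1 / norm (q$j - q$i)) *\<^sub>R (q$j - q$i))" by (simp add: norm_minus_commute algebra_simps)
  also have "\<dots> = - g i j" using tf e by (simp add: target_formation_def)
  finally show "proj (g j i) = proj (g i j)" by (simp add: proj_neg)
qed

lemma tf_pd:
  fixes E :: "'n::finite \<Rightarrow> 'n \<Rightarrow> bool" and g :: "'n \<Rightarrow> 'n \<Rightarrow> real^'d::finite"
  assumes tf: "target_formation E g VL pl q" and rig: "inf_bearing_rigid E q"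
    and und: "undirected_graph E" and card: "card VL \<ge> 2"
    and fx: "fol VL x = x" and z: "x \<bullet> bearing_lap E g x = 0"
  shows "x = 0"
proof -
  have sym: "\<forall>i j. E i j \<longrightarrow> proj (g j i) = proj (g i j)" by (rule tf_sym[OF tf und])
  have "\<And>i j. E i j \<Longrightarrow> proj (g i j) (x$i - x$j) = 0" by (rule bl_quad(2)[OF und sym z])
  then obtain k c where kc: "\<And>i. x$i = c + k *\<^sub>R q$i" using rigid_null[OF rig tf und] by blast
  have "\<not> card VL \<le> Suc 0" using card by simp
  then obtain i1 i2 where i: "i1 \<in> VL" "i2 \<in> VL" "i1 \<noteq> i2"
    using card_le_Suc0_iff_eq[of VL] by auto
  have lz: "x$i = 0" if "i \<in> VL" for i
  proof -
    have "x$i = fol VL x $ i" using fx by simp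
    then show ?thesis using that by (simp add: fol_def)
  qed
  have dq: "q$i1 \<noteq> q$i2" using rig i unfolding inf_bearing_rigid_def by (elim conjE) simp
  have "c + k *\<^sub>R q$i1 = c + k *\<^sub>R q$i2" using lz[OF i(1)] lz[OF i(2)] kc[of i1] kc[of i2] by simp
  then have "k *\<^sub>R (q$i1 - q$i2) = 0" by (simp add: algebra_simps)
  then have k0: "k = 0" using dq by simp
  then have "c = 0" using lz[OF i(1)] kc[of i1] by simp
  then show "x = 0" using k0 kc by (simp add: vec_eq_iff)
qed

context
  fixes E :: "'n::finite \<Rightarrow> 'n \<Rightarrow> bool" and g :: "'n \<Rightarrow> 'n \<Rightarrow> real^'d::finite" and VL :: "'n set"
  assumes und: "undirected_graph E" and sym: "\<forall>i j. E i j \<longrightarrow> proj (g j i) = proj (g i j)"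
    and pd: "\<And>x. fol VL x = x \<Longrightarrow> x \<bullet> bearing_lap E g x = 0 \<Longrightarrow> x = 0"
begin

lemma Lff_linear: "linear (L_ff E g VL)"
proof -
  have "L_ff E g VL = fol VL \<circ> (bearing_lap E g \<circ> fol VL)" by (rule ext) (simp add: L_ff_def)
  then show ?thesis by (simp add: linear_compose fol_linear bl_linear)
qed

lemma Lfl_linear: "linear (L_fl E g VL)"
proof -
  have "L_fl E g VL = fol VL \<circ> (bearing_lap E g \<circ> lead VL)" by (rule ext) (simp add: L_fl_def)
  then show ?thesis by (simp add: linear_compose fol_linear lead_linear bl_linear)
qed

lemma Lff_fol[simp]: "fol VL (L_ff E g VL x) = L_ff E g VL x" "L_ff E g VL (fol VL x) = L_ff E g VL x"
  by (simp_all add: L_ff_def)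

lemma Lff_sym: "L_ff E g VL x \<bullet> y = x \<bullet> L_ff E g VL y"
proof -
  have "L_ff E g VL x \<bullet> y = bearing_lap E g (fol VL x) \<bullet> fol VL y" by (simp add: L_ff_def fol_inner)
  also have "\<dots> = fol VL x \<bullet> bearing_lap E g (fol VL y)" by (rule bl_sym[OF und sym])
  also have "\<dots> = x \<bullet> L_ff E g VL y" by (simp add: L_ff_def fol_inner)
  finally show ?thesis .
qed

lemma Lff_quad: "fol VL x = x \<Longrightarrow> x \<bullet> L_ff E g VL x = x \<bullet> bearing_lap E g x"
  unfolding L_ff_def by (metis fol_inner)

lemma Lff_pos: "fol VL x = x \<Longrightarrow> x \<noteq> 0 \<Longrightarrow> x \<bullet> L_ff E g VL x > 0"
proof -
  assume f: "fol VL x = x" and nz: "x \<noteq> 0"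
  have q: "x \<bullet> L_ff E g VL x = x \<bullet> bearing_lap E g x" by (rule Lff_quad[OF f])
  have "x \<bullet> bearing_lap E g x \<ge> 0" by (rule bl_quad(1)[OF und sym])
  moreover have "x \<bullet> bearing_lap E g x \<noteq> 0" using pd[OF f] nz by blast
  ultimately show ?thesis using q by linarith
qed

lemma Lff_inj: "fol VL x = x \<Longrightarrow> L_ff E g VL x = 0 \<Longrightarrow> x = 0"
  using Lff_pos[of x] by (cases "x = 0") auto

lemma Linv_ex: "\<exists>!x. fol VL x = x \<and> L_ff E g VL x = fol VL w"
proof -
  define T where "T x = L_ff E g VL x + lead VL x" for x
  have lT: "linear T"
    unfolding T_def[abs_def] by (intro linear_compose_add Lff_linear lead_linear)
  have "inj T"
  proof (rule linear_injective_0[THEN iffD2, OF lT], intro allI impI)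
    fix x assume "T x = 0"
    then have a: "L_ff E g VL x + lead VL x = 0" by (simp add: T_def)
    then have "fol VL (L_ff E g VL x + lead VL x) = 0" by simp
    then have l1: "L_ff E g VL x = 0" by simp
    then have "lead VL x = 0" using a by simp
    then have "fol VL x = x" using fol_plus_lead[of VL x] by simp
    then show "x = 0" using Lff_inj l1 by blast
  qed
  then have "surj T" using lT linear_injective_imp_surjective by blast
  then obtain x where x: "T x = fol VL w" by (metis surjD)
  then have a: "L_ff E g VL x + lead VL x = fol VL w" by (simp add: T_def)
  then have "lead VL (L_ff E g VL x + lead VL x) = 0" by simp
  then have "lead VL x = 0" by (simp add: L_ff_def)
  then have fx: "fol VL x = x" using fol_plus_lead[of VL x] by simp
  have Lx: "L_ff E g VL x = fol VL w" using a \<open>lead VL x = 0\<close> by simp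
  show ?thesis
  proof (rule ex1I[of _ x])
    show "fol VL x = x \<and> L_ff E g VL x = fol VL w" using fx Lx by simp
  next
    fix y assume y: "fol VL y = y \<and> L_ff E g VL y = fol VL w"
    have "L_ff E g VL (y - x) = 0" using y Lx linear_diff[OF Lff_linear] by simp
    moreover have "fol VL (y - x) = y - x" using y fx by simp
    ultimately have "y - x = 0" using Lff_inj by blast
    then show "y = x" by simp
  qed
qed

lemma Linv_prop: "fol VL (L_ff_inv E g VL w) = L_ff_inv E g VL w"
   "L_ff E g VL (L_ff_inv E g VL w) = fol VL w"
  using theI'[OF Linv_ex[of w]] by (simp_all add: L_ff_inv_def)

lemma Linv_unique: "fol VL y = y \<Longrightarrow> L_ff E g VL y = fol VL w \<Longrightarrow> L_ff_inv E g VL w = y"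
  using Linv_ex[of w] Linv_prop[of w] by blast

lemma Linv_linear: "linear (L_ff_inv E g VL)"
proof (rule linearI)
  fix a b
  show "L_ff_inv E g VL (a + b) = L_ff_inv E g VL a + L_ff_inv E g VL b"
    by (rule Linv_unique)
      (simp_all add: Linv_prop linear_add[OF Lff_linear])
next
  fix c :: real and a
  show "L_ff_inv E g VL (c *\<^sub>R a) = c *\<^sub>R L_ff_inv E g VL a"
    by (rule Linv_unique)
      (simp_all add: Linv_prop linear_scale[OF Lff_linear])
qed

end



lemma vec_deriv_masked:
  fixes f :: "real \<Rightarrow> real^'d::finite^'n::finite"
  assumes "\<And>i. P i \<Longrightarrow> ((\<lambda>s. f s $ i) has_vector_derivative D $ i) F"
  shows "((\<lambda>s. \<chi> i. if P i then f s $ i else 0) has_vector_derivative (\<chi> i. if P i then D $ i else 0)) F"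
proof -
  define emb :: "'n \<Rightarrow> real^'d \<Rightarrow> real^'d^'n" where "emb i y = (\<chi> j. if j = i then y else 0)" for i y
  have lin: "linear (emb i)" for i
    by (rule linearI) (simp_all add: emb_def vec_eq_iff)
  have bl: "bounded_linear (emb i)" for i
    using lin[of i] by (simp add: linear_conv_bounded_linear)
  have eq: "(\<chi> i. if P i then y i else 0) = (\<Sum>i\<in>{i. P i}. emb i (y i))" for y :: "'n \<Rightarrow> real^'d"
    by (simp add: vec_eq_iff emb_def if_distrib cong: if_cong)
  have "((\<lambda>s. \<Sum>i\<in>{i. P i}. emb i (f s $ i)) has_vector_derivative (\<Sum>i\<in>{i. P i}. emb i (D $ i))) F"
    by (intro has_vector_derivative_sum bounded_linear.has_vector_derivative[OF bl] assms) simp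
  then show ?thesis by (simp only: eq)
qed

lemma exp_decay: "\<alpha> > 0 \<Longrightarrow> ((\<lambda>t::real. C * exp (- \<alpha> * t)) \<longlongrightarrow> 0) at_top"
proof -
  assume a: "\<alpha> > 0"
  have "LIM t at_top. (- \<alpha>) * t :> at_bot"
    by (rule filterlim_tendsto_neg_mult_at_bot[OF tendsto_const]) (use a in \<open>auto intro: filterlim_ident\<close>)
  then have "((\<lambda>t. exp (- \<alpha> * t)) \<longlongrightarrow> 0) at_top"
    by (rule filterlim_compose[OF exp_at_bot])
  then show ?thesis by (rule tendsto_mult_right_zero)
qed

theorem theorem2:
  fixes E :: "'n::finite \<Rightarrow> 'n \<Rightarrow> bool"
    and g :: "'n \<Rightarrow> 'n \<Rightarrow> real^'d::finite"
    and VL :: "'n set"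
    and v :: "real^'d^'n"
    and kP kI :: real
  assumes "CARD('d) \<ge> 2"
    and "undirected_graph E"
    and "card VL \<ge> 2"
    and "kP > 0" and "kI > 0"
  shows "\<exists>c \<alpha>. c > 0 \<and> \<alpha> > 0 \<and>
    (\<forall>p \<xi>. closed_loop E g VL v kP kI p \<xi> \<and> standing_assumption E g VL p \<longrightarrow>
      (let \<delta> = (\<lambda>t. fol VL (p t) - (- L_ff_inv E g VL (L_fl E g VL (p t))));
           \<xi>f = (\<lambda>t. fol VL (\<xi> t));
           \<xi>inf = (1 / kI) *\<^sub>R L_ff_inv E g VL (L_fl E g VL v)
       in (\<forall>t\<ge>0. norm (\<delta> t) + norm (\<xi>f t - \<xi>inf)
                   \<le> c * exp (- \<alpha> * t) * (norm (\<delta> 0) + norm (\<xi>f 0 - \<xi>inf))) \<and>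
          (\<delta> \<longlongrightarrow> 0) at_top \<and>
          (\<xi>f \<longlongrightarrow> \<xi>inf) at_top \<and>
          ((\<lambda>t. fol VL (\<chi> i. vector_derivative (\<lambda>s. p s $ i) (at t)))
              \<longlongrightarrow> - L_ff_inv E g VL (L_fl E g VL v)) at_top))"
proof (cases "\<exists>pl q. target_formation E g VL pl q \<and> inf_bearing_rigid E q")
  case False
  have nA: "\<not> (closed_loop E g VL v kP kI p \<xi> \<and> standing_assumption E g VL p)" for p \<xi>
  proof
    assume "closed_loop E g VL v kP kI p \<xi> \<and> standing_assumption E g VL p"
    then have "\<exists>q. target_formation E g VL (p 0) q \<and> inf_bearing_rigid E q"
      unfolding standing_assumption_def by auto
    then show "False" using False by blast
  qed
  show ?thesis
    by (intro exI[of _ "1::real"] conjI allI impI) (simp_all add: nA)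
next
  case True
  note und = assms(2) and card = assms(3) and kP = assms(4) and kI = assms(5)
  obtain pl q where tf: "target_formation E g VL pl q" and rig: "inf_bearing_rigid E q"
    using True by blast
  have sym: "\<forall>i j. E i j \<longrightarrow> proj (g j i) = proj (g i j)" by (rule tf_sym[OF tf und])
  have pd: "\<And>x. fol VL x = x \<Longrightarrow> x \<bullet> bearing_lap E g x = 0 \<Longrightarrow> x = 0"
    by (rule tf_pd[OF tf rig und card])
  define Lf where "Lf = L_ff E g VL"
  define Li where "Li = L_ff_inv E g VL"
  have linLf: "linear Lf" unfolding Lf_def by (rule Lff_linear[OF und sym pd])
  have linLi: "linear Li" unfolding Li_def by (rule Linv_linear[OF und sym pd])
  have blLf: "bounded_linear Lf" using linLf by (simp add: linear_conv_bounded_linear)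
  have symLf: "\<And>x y. Lf x \<bullet> y = x \<bullet> Lf y" unfolding Lf_def by (rule Lff_sym[OF und sym pd])
  have Li1: "\<And>w. fol VL (Li w) = Li w" unfolding Li_def by (rule Linv_prop(1)[OF und sym pd])
  have Li2: "\<And>w. Lf (Li w) = fol VL w" unfolding Li_def Lf_def by (rule Linv_prop(2)[OF und sym pd])
  have clW: "closed {x::real^'d^'n. fol VL x = x}"
  proof (rule closed_Collect_eq)
    show "continuous_on UNIV (fol VL)"
      using fol_linear[of VL] by (intro linear_continuous_on) (simp add: linear_conv_bounded_linear)
  qed (rule continuous_on_id)
  obtain lam where lam: "lam > 0" and coer: "\<And>x. fol VL x = x \<Longrightarrow> x \<bullet> Lf x \<ge> lam * (norm x)\<^sup>2"
    using coercive[OF linLf clW] Lff_pos[OF und sym pd] unfolding Lf_def by auto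
  obtain M where M: "M > 0" and bnd: "\<And>x. norm (Lf x) \<le> M * norm x"
    using bounded_linear.pos_bounded[OF blLf] by (auto simp: mult.commute)
  obtain c \<alpha> where c: "c > 0" and \<alpha>: "\<alpha> > 0" and ode: "\<And>(Lop::real^'d^'n \<Rightarrow> real^'d^'n) \<delta> e.
     bounded_linear Lop \<and> (\<forall>x y. Lop x \<bullet> y = x \<bullet> Lop y) \<and> (\<forall>x. norm (Lop x) \<le> M * norm x) \<and>
     (\<forall>t\<ge>0. \<delta> t \<bullet> Lop (\<delta> t) \<ge> lam * (norm (\<delta> t))\<^sup>2) \<and>
     (\<forall>t\<ge>0. (\<delta> has_vector_derivative (- kP *\<^sub>R Lop (\<delta> t) - kI *\<^sub>R e t)) (at t within {0..}) \<and>
             (e has_vector_derivative Lop (\<delta> t)) (at t within {0..}))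
     \<Longrightarrow> (\<forall>t\<ge>0. norm (\<delta> t) + norm (e t) \<le> c * exp (- \<alpha> * t) * (norm (\<delta> 0) + norm (e 0)))"
    using ode_expo[OF kP kI lam M] by blast
  show ?thesis
  proof (rule exI[of _ c], rule exI[of _ \<alpha>], intro conjI allI impI c \<alpha>)
    fix p \<xi> :: "real \<Rightarrow> real^'d^'n"
    assume H: "closed_loop E g VL v kP kI p \<xi> \<and> standing_assumption E g VL p"
    define \<delta> where "\<delta> = (\<lambda>t. fol VL (p t) - (- L_ff_inv E g VL (L_fl E g VL (p t))))"
    define \<xi>f where "\<xi>f = (\<lambda>t. fol VL (\<xi> t))"
    define \<xi>inf where "\<xi>inf = (1 / kI) *\<^sub>R L_ff_inv E g VL (L_fl E g VL v)"
    define e where "e t = \<xi>f t - \<xi>inf" for t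
    define D where "D t = (\<chi> i. if i \<in> VL then v$i else
       (- kP *\<^sub>R (\<Sum>j\<in>{j. E i j}. proj (g i j) (p t $ i - p t $ j)) - kI *\<^sub>R (\<xi> t $ i)))" for t
    have CL: "closed_loop E g VL v kP kI p \<xi>" using H by blast
    have dpi: "((\<lambda>s. p s $ i) has_vector_derivative D t $ i) (at t within {0..})" if t: "t \<ge> 0" for t i
      using CL t unfolding closed_loop_def D_def by (cases "i \<in> VL") auto
    have dxi: "((\<lambda>s. \<xi> s $ i) has_vector_derivative bearing_lap E g (p t) $ i) (at t within {0..})"
      if t: "t \<ge> 0" and i: "i \<notin> VL" for t i
      using CL t i unfolding closed_loop_def bearing_lap_def by auto
    have folD: "fol VL (D t) = - kP *\<^sub>R fol VL (bearing_lap E g (p t)) - kI *\<^sub>R \<xi>f t" for t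
      by (simp add: D_def \<xi>f_def fol_def bearing_lap_def vec_eq_iff)
    have Lfl: "L_fl E g VL y = fol VL (bearing_lap E g (lead VL y))" for y by (simp add: L_fl_def)
    have fol\<delta>: "fol VL (\<delta> t) = \<delta> t" for t
      unfolding \<delta>_def using Li1 by (simp add: Li_def)
    have bl_split: "fol VL (bearing_lap E g y) = Lf (fol VL y) + L_fl E g VL y" for y
    proof -
      have "bearing_lap E g y = bearing_lap E g (fol VL y) + bearing_lap E g (lead VL y)"
        using linear_add[OF bl_linear, of E g "fol VL y" "lead VL y"] fol_plus_lead[of VL y] by simp
      then show ?thesis by (simp add: Lf_def L_ff_def L_fl_def)
    qed
    have Lf\<delta>: "Lf (\<delta> t) = fol VL (bearing_lap E g (p t))" for t
    proof -
      have "Lf (\<delta> t) = Lf (fol VL (p t)) + Lf (Li (L_fl E g VL (p t)))"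
        unfolding \<delta>_def Li_def[symmetric] using linear_add[OF linLf] by simp
      also have "\<dots> = Lf (fol VL (p t)) + L_fl E g VL (p t)"
        by (simp add: Li2 L_fl_def)
      finally show ?thesis using bl_split by simp
    qed
    have kIxi: "kI *\<^sub>R \<xi>inf = Li (L_fl E g VL v)" using kI by (simp add: \<xi>inf_def Li_def)
    have d\<delta>: "(\<delta> has_vector_derivative (- kP *\<^sub>R Lf (\<delta> t) - kI *\<^sub>R e t)) (at t within {0..})"
      if t: "t \<ge> 0" for t
    proof -
      have h1: "((\<lambda>s. fol VL (p s)) has_vector_derivative fol VL (D t)) (at t within {0..})"
        unfolding fol_def by (rule vec_deriv_masked) (rule dpi[OF t])
      have h2: "((\<lambda>s. lead VL (p s)) has_vector_derivative lead VL v) (at t within {0..})"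
      proof -
        show ?thesis unfolding lead_def
        proof (rule vec_deriv_masked)
          fix i assume "i \<in> VL"
          then show "((\<lambda>s. p s $ i) has_vector_derivative v $ i) (at t within {0..})"
            using dpi[OF t, of i] by (simp add: D_def)
        qed
      qed
      define K where "K y = Li (fol VL (bearing_lap E g y))" for y
      have linK: "linear K"
      proof -
        have "K = Li \<circ> (fol VL \<circ> bearing_lap E g)" by (rule ext) (simp add: K_def)
        then show ?thesis by (simp add: linear_compose linLi fol_linear bl_linear)
      qed
      have blK: "bounded_linear K" using linK by (simp add: linear_conv_bounded_linear)
      have eq\<delta>: "\<delta> = (\<lambda>s. fol VL (p s) - (- K (lead VL (p s))))"
        by (rule ext) (simp add: \<delta>_def K_def Li_def L_fl_def)
      have "(\<delta> has_vector_derivative (fol VL (D t) - (- K (lead VL v)))) (at t within {0..})"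
        unfolding eq\<delta>
        by (intro has_vector_derivative_diff has_vector_derivative_minus h1
            bounded_linear.has_vector_derivative[OF blK h2])
      moreover have "fol VL (D t) - (- K (lead VL v)) = - kP *\<^sub>R Lf (\<delta> t) - kI *\<^sub>R e t"
      proof -
        have "K (lead VL v) = kI *\<^sub>R \<xi>inf" unfolding kIxi by (simp add: K_def L_fl_def)
        then show ?thesis by (simp add: folD Lf\<delta> e_def algebra_simps)
      qed
      ultimately show ?thesis by simp
    qed
    have de: "(e has_vector_derivative Lf (\<delta> t)) (at t within {0..})" if t: "t \<ge> 0" for t
    proof -
      have "((\<lambda>s. fol VL (\<xi> s)) has_vector_derivative fol VL (bearing_lap E g (p t))) (at t within {0..})"
        unfolding fol_def by (rule vec_deriv_masked) (rule dxi[OF t])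
      then have "((\<lambda>s. \<xi>f s - \<xi>inf) has_vector_derivative fol VL (bearing_lap E g (p t))) (at t within {0..})"
        unfolding \<xi>f_def by (simp add: has_vector_derivative_diff_const)
      then show ?thesis by (simp add: e_def[abs_def] Lf\<delta>)
    qed
    have bound: "\<forall>t\<ge>0. norm (\<delta> t) + norm (e t) \<le> c * exp (- \<alpha> * t) * (norm (\<delta> 0) + norm (e 0))"
      by (rule ode) (use blLf symLf bnd coer fol\<delta> d\<delta> de in auto)
    define N0 where "N0 = norm (\<delta> 0) + norm (e 0)"
    have dec: "((\<lambda>t. c * exp (- \<alpha> * t) * N0) \<longlongrightarrow> 0) at_top"
    proof -
      have "((\<lambda>t. (c * N0) * exp (- \<alpha> * t)) \<longlongrightarrow> 0) at_top" by (rule exp_decay[OF \<alpha>])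
      then show ?thesis by (simp add: ac_simps)
    qed
    have lim\<delta>: "(\<delta> \<longlongrightarrow> 0) at_top"
    proof (rule Lim_null_comparison[OF _ dec])
      show "\<forall>\<^sub>F t in at_top. norm (\<delta> t) \<le> c * exp (- \<alpha> * t) * N0"
        using eventually_ge_at_top[of "0::real"]
      proof (rule eventually_mono)
        fix t :: real assume "0 \<le> t"
        then have "norm (\<delta> t) + norm (e t) \<le> c * exp (- \<alpha> * t) * N0" using bound by (simp add: N0_def)
        then show "norm (\<delta> t) \<le> c * exp (- \<alpha> * t) * N0" using norm_ge_zero[of "e t"] by linarith
      qed
    qed
    have lime: "(e \<longlongrightarrow> 0) at_top"
    proof (rule Lim_null_comparison[OF _ dec])
      show "\<forall>\<^sub>F t in at_top. norm (e t) \<le> c * exp (- \<alpha> * t) * N0"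
        using eventually_ge_at_top[of "0::real"]
      proof (rule eventually_mono)
        fix t :: real assume "0 \<le> t"
        then have "norm (\<delta> t) + norm (e t) \<le> c * exp (- \<alpha> * t) * N0" using bound by (simp add: N0_def)
        then show "norm (e t) \<le> c * exp (- \<alpha> * t) * N0" using norm_ge_zero[of "\<delta> t"] by linarith
      qed
    qed
    have lim\<xi>: "(\<xi>f \<longlongrightarrow> \<xi>inf) at_top"
    proof -
      have "((\<lambda>t. e t + \<xi>inf) \<longlongrightarrow> 0 + \<xi>inf) at_top" by (intro tendsto_add lime tendsto_const)
      then show ?thesis by (simp add: e_def)
    qed
    have limv: "((\<lambda>t. fol VL (\<chi> i. vector_derivative (\<lambda>s. p s $ i) (at t)))
              \<longlongrightarrow> - L_ff_inv E g VL (L_fl E g VL v)) at_top"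
    proof -
      have ev: "\<forall>\<^sub>F t in at_top. - kP *\<^sub>R Lf (\<delta> t) - kI *\<^sub>R \<xi>f t = fol VL (\<chi> i. vector_derivative (\<lambda>s. p s $ i) (at t))"
        using eventually_gt_at_top[of "0::real"]
      proof (rule eventually_mono)
        fix t :: real assume t: "t > 0"
        have "(\<chi> i. vector_derivative (\<lambda>s. p s $ i) (at t)) = D t"
        proof (subst vec_eq_iff, intro allI)
          fix i
          have "((\<lambda>s. p s $ i) has_vector_derivative D t $ i) (at t)"
            using dpi[of t i] t by (simp add: at_within_pos)
          then show "(\<chi> i. vector_derivative (\<lambda>s. p s $ i) (at t)) $ i = D t $ i"
            by (simp add: vector_derivative_at)
        qed
        then show "- kP *\<^sub>R Lf (\<delta> t) - kI *\<^sub>R \<xi>f t = fol VL (\<chi> i. vector_derivative (\<lambda>s. p s $ i) (at t))"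
          by (simp add: folD Lf\<delta>)
      qed
      have "((\<lambda>t. - kP *\<^sub>R Lf (\<delta> t) - kI *\<^sub>R \<xi>f t) \<longlongrightarrow> - kP *\<^sub>R Lf 0 - kI *\<^sub>R \<xi>inf) at_top"
        by (intro tendsto_intros bounded_linear.tendsto[OF blLf] lim\<delta> lim\<xi>)
      moreover have "- kP *\<^sub>R Lf 0 - kI *\<^sub>R \<xi>inf = - L_ff_inv E g VL (L_fl E g VL v)"
        using kIxi linear_0[OF linLf] by (simp add: Li_def)
      ultimately show ?thesis using ev by (simp add: Lim_transform_eventually)
    qed
    have main: "(\<forall>t\<ge>0. norm (\<delta> t) + norm (\<xi>f t - \<xi>inf)
                   \<le> c * exp (- \<alpha> * t) * (norm (\<delta> 0) + norm (\<xi>f 0 - \<xi>inf))) \<and>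
          (\<delta> \<longlongrightarrow> 0) at_top \<and> (\<xi>f \<longlongrightarrow> \<xi>inf) at_top \<and>
          ((\<lambda>t. fol VL (\<chi> i. vector_derivative (\<lambda>s. p s $ i) (at t)))
              \<longlongrightarrow> - L_ff_inv E g VL (L_fl E g VL v)) at_top"
      using bound lim\<delta> lim\<xi> limv by (simp add: e_def)
    show "let \<delta> = (\<lambda>t. fol VL (p t) - (- L_ff_inv E g VL (L_fl E g VL (p t))));
           \<xi>f = (\<lambda>t. fol VL (\<xi> t));
           \<xi>inf = (1 / kI) *\<^sub>R L_ff_inv E g VL (L_fl E g VL v)
       in (\<forall>t\<ge>0. norm (\<delta> t) + norm (\<xi>f t - \<xi>inf)
                   \<le> c * exp (- \<alpha> * t) * (norm (\<delta> 0) + norm (\<xi>f 0 - \<xi>inf))) \<and>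
          (\<delta> \<longlongrightarrow> 0) at_top \<and>
          (\<xi>f \<longlongrightarrow> \<xi>inf) at_top \<and>
          ((\<lambda>t. fol VL (\<chi> i. vector_derivative (\<lambda>s. p s $ i) (at t)))
              \<longlongrightarrow> - L_ff_inv E g VL (L_fl E g VL v)) at_top"
      using main unfolding Let_def \<delta>_def \<xi>f_def \<xi>inf_def .
  qed
qed


end
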